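(* Let $I\subseteq S=\Bbbk[x_1,\dots,x_n]$ be a squarefree monomial ideal which is Gotzmann in $S$, and suppose $I\subseteq(x_i)$. Then the ideal $\frac{1}{x_i}I=\{f\in S: x_if\in I\}$ (generated by the monomials $m/x_i$ for $m$ a minimal generator of $I$) is Gotzmann in $S$.
   Context: Let $\Bbbk$ be a field and $S=\Bbbk[x_1,\dots,x_n]$, $\mathbf m=(x_1,\dots,x_n)$. A monomial ideal is squarefree if its minimal monomial generators are squarefree. For a homogeneous ideal $I$, $I_d$ is its degree-$d$ component, $|I_d|$ its $\Bbbk$-dimension, and $\mathbf m_1I_d$ the span of $\{x_jf: f\in I_d\}$. An ideal $I$ of $S$ is Gotzmann if for every $d$ and every homogeneous ideal $J\subseteq S$ with $|J_d|=|I_d|$ one has $|\mathbf m_1I_d|\le|\mathbf m_1J_d|$. *)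

theory Defs
  imports Complex_Main "HOL-Library.Poly_Mapping"
begin

text \<open>S = k[x_0,...,x_{n-1}] is the set of
 polynomials all of whose monomials only involve variables with index < n.\<close>

type_synonym 'k mpoly = "(nat \<Rightarrow>\<^sub>0 nat) \<Rightarrow>\<^sub>0 'k"

definition polyS :: "nat \<Rightarrow> ('k::field) mpoly set" where
  "polyS n = {p. \<forall>m \<in> Poly_Mapping.keys p. Poly_Mapping.keys m \<subseteq> {..<n}}"

definition var :: "nat \<Rightarrow> ('k::field) mpoly" where
  "var j = Poly_Mapping.single (Poly_Mapping.single j 1) 1"

definition monomial_pm :: "(nat \<Rightarrow>\<^sub>0 nat) \<Rightarrow> ('k::field) mpoly" where
  "monomial_pm m = Poly_Mapping.single m 1"

definition mdeg :: "(nat \<Rightarrow>\<^sub>0 nat) \<Rightarrow> nat" where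
  "mdeg m = (\<Sum>j\<in>Poly_Mapping.keys m. Poly_Mapping.lookup m j)"

definition kscale :: "'k::field \<Rightarrow> 'k mpoly \<Rightarrow> 'k mpoly" where
  "kscale c p = Poly_Mapping.map (\<lambda>a. c * a) p"

definition kspan :: "('k::field) mpoly set \<Rightarrow> 'k mpoly set" where
  "kspan V = module.span kscale V"

definition kdim :: "('k::field) mpoly set \<Rightarrow> nat" where
  "kdim V = vector_space.dim kscale V"

definition is_ideal :: "nat \<Rightarrow> ('k::field) mpoly set \<Rightarrow> bool" where
  "is_ideal n J \<longleftrightarrow> J \<subseteq> polyS n \<and> 0 \<in> J \<and>
     (\<forall>p\<in>J. \<forall>q\<in>J. p + q \<in> J) \<and> (\<forall>f\<in>polyS n. \<forall>p\<in>J. f * p \<in> J)"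

definition ideal_gen :: "nat \<Rightarrow> ('k::field) mpoly set \<Rightarrow> 'k mpoly set" where
  "ideal_gen n G = \<Inter>{J. is_ideal n J \<and> G \<subseteq> J}"

definition hcomp :: "nat \<Rightarrow> ('k::field) mpoly \<Rightarrow> 'k mpoly" where
  "hcomp d p = Abs_poly_mapping (\<lambda>m. Poly_Mapping.lookup p m when mdeg m = d)"

definition homogeneous :: "nat \<Rightarrow> ('k::field) mpoly \<Rightarrow> bool" where
  "homogeneous d p \<longleftrightarrow> (\<forall>m\<in>Poly_Mapping.keys p. mdeg m = d)"

definition homog_ideal :: "nat \<Rightarrow> ('k::field) mpoly set \<Rightarrow> bool" where
  "homog_ideal n J \<longleftrightarrow> is_ideal n J \<and> (\<forall>p\<in>J. \<forall>d. hcomp d p \<in> J)"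

definition degcomp :: "('k::field) mpoly set \<Rightarrow> nat \<Rightarrow> 'k mpoly set" where
  "degcomp I d = {p\<in>I. homogeneous d p}"

definition m1mul :: "nat \<Rightarrow> ('k::field) mpoly set \<Rightarrow> 'k mpoly set" where
  "m1mul n V = kspan {var j * f | j f. j < n \<and> f \<in> V}"

definition gotzmann :: "nat \<Rightarrow> ('k::field) mpoly set \<Rightarrow> bool" where
  "gotzmann n I \<longleftrightarrow> (\<forall>d. \<forall>J::'k mpoly set. homog_ideal n J \<and>
      kdim (degcomp J d) = kdim (degcomp I d) \<longrightarrow>
      kdim (m1mul n (degcomp I d)) \<le> kdim (m1mul n (degcomp J d)))"

definition squarefree_mon :: "nat \<Rightarrow> (nat \<Rightarrow>\<^sub>0 nat) \<Rightarrow> bool" where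
  "squarefree_mon n m \<longleftrightarrow> Poly_Mapping.keys m \<subseteq> {..<n} \<and> (\<forall>j. Poly_Mapping.lookup m j \<le> 1)"

text \<open>A squarefree monomial ideal: an ideal generated by squarefree monomials
  (equivalently, a monomial ideal whose minimal monomial generators are squarefree).\<close>
definition squarefree_monomial_ideal :: "nat \<Rightarrow> ('k::field) mpoly set \<Rightarrow> bool" where
  "squarefree_monomial_ideal n I \<longleftrightarrow>
     (\<exists>G. (\<forall>m\<in>G. squarefree_mon n m) \<and> I = ideal_gen n (monomial_pm ` G))"

definition colon_var :: "nat \<Rightarrow> nat \<Rightarrow> ('k::field) mpoly set \<Rightarrow> 'k mpoly set" where
  "colon_var n i I = {f \<in> polyS n. var i * f \<in> I}"

end

theory Submission
  imports Defs
begin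

lemma kscale_conv: "kscale c p = Poly_Mapping.single 0 c * p"
  unfolding kscale_def by (rule mult_map_scale_conv_mult)

lemma vs_kscale: "vector_space (kscale :: 'k::field \<Rightarrow> 'k mpoly \<Rightarrow> 'k mpoly)"
  by unfold_locales (simp_all add: kscale_conv algebra_simps single_add mult_single flip: mult.assoc)

lemma lin_mult: "Vector_Spaces.linear (kscale :: 'k::field \<Rightarrow> 'k mpoly \<Rightarrow> 'k mpoly) kscale (\<lambda>p. q * p)"
  unfolding Vector_Spaces.linear_def module_hom_def module_hom_axioms_def
  using vs_kscale by (auto simp: module_iff_vector_space kscale_conv algebra_simps)

lemma kdim_image:
  assumes lin: "Vector_Spaces.linear (kscale :: 'k::field \<Rightarrow> 'k mpoly \<Rightarrow> 'k mpoly) kscale f"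
    and fi: "inj f"
  shows "kdim (f ` S) = kdim S"
proof -
  interpret lf: Vector_Spaces.linear kscale kscale f by fact
  obtain B where B: "B \<subseteq> S" "lf.vs1.independent B" "S \<subseteq> lf.vs1.span B" "card B = lf.vs1.dim S"
    using lf.vs1.basis_exists[of S] by auto
  then have "lf.vs1.span S = lf.vs1.span B"
    using lf.vs1.span_mono[of B S] lf.vs1.span_mono[of S "lf.vs1.span B"] lf.vs1.span_span[of B] by auto
  moreover have "card (f ` B) = card B"
    using fi card_image[of f B] inj_on_subset[of f UNIV B] by auto
  moreover have ind: "lf.vs1.independent (f ` B)"
    using lf.dependent_inj_imageD[of B] B(2) inj_on_subset[OF fi subset_UNIV] by blast
  moreover have "lf.vs1.span (f ` S) = lf.vs1.span (f ` B)"
    using lf.span_image[of S] lf.span_image[of B] \<open>lf.vs1.span S = lf.vs1.span B\<close> by simp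
  ultimately have "lf.vs1.dim (f ` S) = card B"
    by (metis lf.vs1.dim_span lf.vs1.dim_eq_card_independent)
  then show ?thesis unfolding kdim_def using B(4) by simp
qed

lemma kspan_image:
  assumes lin: "Vector_Spaces.linear (kscale :: 'k::field \<Rightarrow> 'k mpoly \<Rightarrow> 'k mpoly) kscale f"
  shows "kspan (f ` S) = f ` kspan S"
proof -
  interpret lf: Vector_Spaces.linear kscale kscale f by fact
  show ?thesis unfolding kspan_def by (rule lf.span_image)
qed

lemma lookup_single_mult_gen:
  "Poly_Mapping.lookup (Poly_Mapping.single (t::nat \<Rightarrow>\<^sub>0 nat) (c::'k::field) * p) k =
     c * (\<Sum>q. Poly_Mapping.lookup p q when k = t + q)"
  by (simp add: lookup_mult lookup_single when_mult)

lemma lookup_single_mult: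
  "Poly_Mapping.lookup (Poly_Mapping.single (t::nat \<Rightarrow>\<^sub>0 nat) (c::'k::field) * p) (t + s) =
     c * Poly_Mapping.lookup p s"
  by (simp add: lookup_single_mult_gen)

lemma lookup_single_mult0:
  assumes "\<And>s. k \<noteq> t + s"
  shows "Poly_Mapping.lookup (Poly_Mapping.single (t::nat \<Rightarrow>\<^sub>0 nat) (c::'k::field) * p) k = 0"
  using assms by (simp add: lookup_single_mult_gen)

definition ee :: "nat \<Rightarrow> (nat \<Rightarrow>\<^sub>0 nat)" where "ee i = Poly_Mapping.single i 1"

lemma var_ee: "var i = Poly_Mapping.single (ee i) 1"
  unfolding var_def ee_def ..

lemma lookup_var_mult: "Poly_Mapping.lookup ((var i :: 'k::field mpoly) * p) (ee i + s) = Poly_Mapping.lookup p s"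
  unfolding var_ee by (simp add: lookup_single_mult)

lemma keys_var_mult: "Poly_Mapping.keys ((var i :: 'k::field mpoly) * p) = (\<lambda>m. ee i + m) ` Poly_Mapping.keys p"
proof safe
  fix k assume k: "k \<in> Poly_Mapping.keys (var i * p)"
  show "k \<in> (+) (ee i) ` Poly_Mapping.keys p"
  proof (cases "\<exists>s. k = ee i + s")
    case True
    then obtain s where "k = ee i + s" by blast
    with k show ?thesis by (auto simp: lookup_var_mult in_keys_iff)
  next
    case False
    then have "Poly_Mapping.lookup ((var i :: 'k::field mpoly) * p) k = 0"
      unfolding var_ee by (intro lookup_single_mult0) auto
    with k show ?thesis by (simp add: in_keys_iff)
  qed
next
  fix m assume "m \<in> Poly_Mapping.keys p"
  then show "ee i + m \<in> Poly_Mapping.keys (var i * p)"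
    by (simp add: lookup_var_mult in_keys_iff)
qed

lemma inj_var_mult: "inj (\<lambda>p. (var i :: 'k::field mpoly) * p)"
proof (rule injI)
  fix p q :: "'k mpoly" assume eq: "var i * p = var i * q"
  have "Poly_Mapping.lookup (var i * p) (ee i + s) = Poly_Mapping.lookup (var i * q) (ee i + s)" for s
    by (simp only: eq)
  then show "p = q" by (intro poly_mapping_eqI) (simp add: lookup_var_mult)
qed

lemma mdeg_sum: "finite A \<Longrightarrow> Poly_Mapping.keys m \<subseteq> A \<Longrightarrow> mdeg m = (\<Sum>j\<in>A. Poly_Mapping.lookup m j)"
  unfolding mdeg_def by (rule sum.mono_neutral_left) (auto simp: in_keys_iff)

lemma keys_ee_plus: "Poly_Mapping.keys (ee i + m) = insert i (Poly_Mapping.keys m)"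
  by (auto simp: ee_def in_keys_iff lookup_add lookup_single when_def split: if_splits)

lemma mdeg_ee_plus: "mdeg (ee i + m) = Suc (mdeg m)"
proof -
  let ?A = "insert i (Poly_Mapping.keys m)"
  have "mdeg (ee i + m) = (\<Sum>j\<in>?A. Poly_Mapping.lookup (ee i + m) j)"
    by (rule mdeg_sum) (auto simp: keys_ee_plus)
  also have "\<dots> = (\<Sum>j\<in>?A. Poly_Mapping.lookup (ee i) j) + (\<Sum>j\<in>?A. Poly_Mapping.lookup m j)"
    by (simp add: lookup_add sum.distrib)
  also have "(\<Sum>j\<in>?A. Poly_Mapping.lookup (ee i) j) = 1"
    by (simp add: ee_def lookup_single when_def)
  also have "(\<Sum>j\<in>?A. Poly_Mapping.lookup m j) = mdeg m"
    by (rule mdeg_sum[symmetric]) auto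
  finally show ?thesis by simp
qed

lemma homogeneous_var_mult: "homogeneous (Suc d) ((var i :: 'k::field mpoly) * p) \<longleftrightarrow> homogeneous d p"
  unfolding homogeneous_def keys_var_mult by (auto simp: mdeg_ee_plus)

lemma homogeneous0_var_mult: "homogeneous 0 ((var i :: 'k::field mpoly) * p) \<longleftrightarrow> p = 0"
  unfolding homogeneous_def keys_var_mult by (auto simp: mdeg_ee_plus)

lemma polyS_var_mult: "i < n \<Longrightarrow> ((var i :: 'k::field mpoly) * p \<in> polyS n) \<longleftrightarrow> p \<in> polyS n"
  by (auto simp: polyS_def keys_var_mult keys_ee_plus)

lemma lookup_hcomp: "Poly_Mapping.lookup (hcomp d q) m = (Poly_Mapping.lookup q m when mdeg m = d)"
proof -
  have "finite {m. (Poly_Mapping.lookup q m when mdeg m = d) \<noteq> 0}"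
    by (rule finite_subset[OF _ finite_lookup[of q]]) auto
  then show ?thesis unfolding hcomp_def by simp
qed

lemma lookup_var_mult0: "(\<And>s. k \<noteq> ee i + s) \<Longrightarrow> Poly_Mapping.lookup ((var i :: 'k::field mpoly) * p) k = 0"
  unfolding var_ee by (rule lookup_single_mult0)

lemma hcomp_var_mult: "hcomp (Suc d) ((var i :: 'k::field mpoly) * p) = var i * hcomp d p"
proof (rule poly_mapping_eqI)
  fix k
  show "Poly_Mapping.lookup (hcomp (Suc d) (var i * p)) k = Poly_Mapping.lookup (var i * hcomp d p) k"
  proof (cases "\<exists>s. k = ee i + s")
    case True
    then obtain s where "k = ee i + s" by blast
    then show ?thesis by (simp add: lookup_hcomp lookup_var_mult mdeg_ee_plus)
  next
    case False
    then show ?thesis by (simp add: lookup_hcomp lookup_var_mult0)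
  qed
qed

lemma hcomp0_var_mult: "hcomp 0 ((var i :: 'k::field mpoly) * p) = 0"
proof (rule poly_mapping_eqI)
  fix k
  show "Poly_Mapping.lookup (hcomp 0 (var i * p)) k = Poly_Mapping.lookup 0 k"
  proof (cases "\<exists>s. k = ee i + s")
    case True
    then obtain s where "k = ee i + s" by blast
    then show ?thesis by (simp add: lookup_hcomp lookup_var_mult mdeg_ee_plus)
  next
    case False
    then show ?thesis by (simp add: lookup_hcomp lookup_var_mult0)
  qed
qed

lemma polyS_mult:
  assumes "f \<in> polyS n" "g \<in> polyS n" shows "(f * g :: 'k::field mpoly) \<in> polyS n"
  unfolding polyS_def
proof (intro CollectI ballI)
  fix m assume "m \<in> Poly_Mapping.keys (f * g)"
  then obtain a b where ab: "a \<in> Poly_Mapping.keys f" "b \<in> Poly_Mapping.keys g" "m = a + b"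
    using keys_mult[of f g] by blast
  then have "Poly_Mapping.keys m \<subseteq> Poly_Mapping.keys a \<union> Poly_Mapping.keys b"
    using keys_add[of a b] by simp
  moreover have "Poly_Mapping.keys a \<subseteq> {..<n}" "Poly_Mapping.keys b \<subseteq> {..<n}"
    using ab(1,2) assms unfolding polyS_def by auto
  ultimately show "Poly_Mapping.keys m \<subseteq> {..<n}" by blast
qed

lemma polyS_add: "f \<in> polyS n \<Longrightarrow> g \<in> polyS n \<Longrightarrow> (f + g :: 'k::field mpoly) \<in> polyS n"
  unfolding polyS_def using keys_add[of f g] by (auto dest!: subsetD)

lemma polyS_0: "(0 :: 'k::field mpoly) \<in> polyS n"
  unfolding polyS_def by simp

lemma polyS_1: "(1 :: 'k::field mpoly) \<in> polyS n"
  unfolding polyS_def by simp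

lemma ideal_gen_var_sub:
  assumes "i < n"
  shows "ideal_gen n {var i :: 'k::field mpoly} \<subseteq> (\<lambda>p. var i * p) ` polyS n"
proof -
  have "is_ideal n ((\<lambda>p. (var i :: 'k mpoly) * p) ` polyS n)"
    unfolding is_ideal_def
  proof (intro conjI ballI)
    show "(\<lambda>p. (var i :: 'k mpoly) * p) ` polyS n \<subseteq> polyS n"
      using polyS_var_mult[OF assms] by auto
    show "0 \<in> (\<lambda>p. (var i :: 'k mpoly) * p) ` polyS n"
      using polyS_0 by (auto intro!: image_eqI[of _ _ 0])
  next
    fix p q assume "p \<in> (\<lambda>p. (var i :: 'k mpoly) * p) ` polyS n" "q \<in> (\<lambda>p. (var i :: 'k mpoly) * p) ` polyS n"
    then obtain a b where "a \<in> polyS n" "b \<in> polyS n" "p = var i * a" "q = var i * b" by auto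
    then show "p + q \<in> (\<lambda>p. (var i :: 'k mpoly) * p) ` polyS n"
      by (auto intro!: image_eqI[of _ _ "a + b"] polyS_add simp: algebra_simps)
  next
    fix f p :: "'k mpoly" assume "f \<in> polyS n" "p \<in> (\<lambda>p. (var i :: 'k mpoly) * p) ` polyS n"
    then obtain a where "a \<in> polyS n" "p = var i * a" by auto
    with \<open>f \<in> polyS n\<close> show "f * p \<in> (\<lambda>p. (var i :: 'k mpoly) * p) ` polyS n"
      by (auto intro!: image_eqI[of _ _ "f * a"] polyS_mult simp: algebra_simps)
  qed
  moreover have "var i \<in> (\<lambda>p. (var i :: 'k mpoly) * p) ` polyS n"
    using polyS_1 by (auto intro!: image_eqI[of _ _ 1])
  ultimately show ?thesis unfolding ideal_gen_def by blast
qed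

lemma homog_ideal_var_mult:
  assumes "i < n" and J: "homog_ideal n (J :: 'k::field mpoly set)"
  shows "homog_ideal n ((\<lambda>p. var i * p) ` J)"
  unfolding homog_ideal_def is_ideal_def
proof (intro conjI ballI allI)
  have JS: "J \<subseteq> polyS n" and J0: "0 \<in> J" and Jadd: "\<And>p q. p \<in> J \<Longrightarrow> q \<in> J \<Longrightarrow> p + q \<in> J"
    and Jmul: "\<And>f p. f \<in> polyS n \<Longrightarrow> p \<in> J \<Longrightarrow> f * p \<in> J"
    and Jh: "\<And>p d. p \<in> J \<Longrightarrow> hcomp d p \<in> J"
    using J unfolding homog_ideal_def is_ideal_def by auto
  show "(\<lambda>p. var i * p) ` J \<subseteq> polyS n"
    using JS polyS_var_mult[OF assms(1)] by auto
  show "0 \<in> (\<lambda>p. var i * p) ` J"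
    using J0 by (auto intro!: image_eqI[of _ _ 0])
  fix p :: "'k mpoly" assume "p \<in> (\<lambda>p. var i * p) ` J"
  then obtain a where a: "a \<in> J" "p = var i * a" by auto
  {
    fix q :: "'k mpoly" assume "q \<in> (\<lambda>p. var i * p) ` J"
    then obtain b where "b \<in> J" "q = var i * b" by auto
    with a show "p + q \<in> (\<lambda>p. var i * p) ` J"
      by (auto intro!: image_eqI[of _ _ "a + b"] Jadd simp: algebra_simps)
  }
  {
    fix f :: "'k mpoly" assume "f \<in> polyS n"
    with a show "f * p \<in> (\<lambda>p. var i * p) ` J"
      by (auto intro!: image_eqI[of _ _ "f * a"] Jmul simp: algebra_simps)
  }
  {
    fix d
    show "hcomp d p \<in> (\<lambda>p. var i * p) ` J"
    proof (cases d)
      case 0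
      then show ?thesis using a J0 by (auto simp: hcomp0_var_mult intro!: image_eqI[of _ _ 0])
    next
      case (Suc d')
      then show ?thesis using a Jh by (auto simp: hcomp_var_mult)
    qed
  }
qed

lemma degcomp_var_mult: "degcomp ((\<lambda>p. (var i :: 'k::field mpoly) * p) ` J) (Suc d) = (\<lambda>p. var i * p) ` degcomp J d"
  unfolding degcomp_def by (auto simp: homogeneous_var_mult)

lemma m1mul_var_mult: "m1mul n ((\<lambda>p. (var i :: 'k::field mpoly) * p) ` V) = (\<lambda>p. var i * p) ` m1mul n V"
proof -
  have "{var j * f | j f. j < n \<and> f \<in> (\<lambda>p. (var i :: 'k::field mpoly) * p) ` V}
      = (\<lambda>p. var i * p) ` {var j * f | j f. j < n \<and> f \<in> V}"
  proof (rule set_eqI, rule iffI)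
    fix x assume "x \<in> {var j * f | j f. j < n \<and> f \<in> (\<lambda>p. (var i :: 'k::field mpoly) * p) ` V}"
    then obtain j f where "j < n" "f \<in> V" "x = var j * (var i * f)" by blast
    then have "x = var i * (var j * f)" "var j * f \<in> {var j * f | j f. j < n \<and> f \<in> V}"
      by (auto simp: mult.left_commute)
    then show "x \<in> (\<lambda>p. var i * p) ` {var j * f | j f. j < n \<and> f \<in> V}" by blast
  next
    fix x assume "x \<in> (\<lambda>p. (var i :: 'k::field mpoly) * p) ` {var j * f | j f. j < n \<and> f \<in> V}"
    then obtain j f where "j < n" "f \<in> V" "x = var i * (var j * f)" by blast
    then have "x = var j * (var i * f)" "var i * f \<in> (\<lambda>p. (var i :: 'k::field mpoly) * p) ` V"
      by (auto simp: mult.left_commute)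
    with \<open>j < n\<close> show "x \<in> {var j * f | j f. j < n \<and> f \<in> (\<lambda>p. (var i :: 'k::field mpoly) * p) ` V}" by blast
  qed
  then show ?thesis unfolding m1mul_def by (simp add: kspan_image[OF lin_mult])
qed

theorem lemma3p7:
  fixes I :: "('k::field) mpoly set" and n i :: nat
  assumes "i < n"
    and "squarefree_monomial_ideal n I"
    and "gotzmann n I"
    and "I \<subseteq> ideal_gen n {var i}"
  shows "gotzmann n (colon_var n i I)"
proof -
  define K where "K = colon_var n i I"
  have IK: "I = (\<lambda>p. var i * p) ` K"
  proof
    show "I \<subseteq> (\<lambda>p. var i * p) ` K"
    proof
      fix p assume "p \<in> I"
      then have "p \<in> (\<lambda>p. var i * p) ` polyS n"
        using assms(4) ideal_gen_var_sub[OF assms(1)] by blast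
      then obtain g where "g \<in> polyS n" "p = var i * g" by blast
      with \<open>p \<in> I\<close> show "p \<in> (\<lambda>p. var i * p) ` K"
        unfolding K_def colon_var_def by blast
    qed
    show "(\<lambda>p. var i * p) ` K \<subseteq> I"
      unfolding K_def colon_var_def by blast
  qed
  have lin: "Vector_Spaces.linear (kscale :: 'k \<Rightarrow> 'k mpoly \<Rightarrow> 'k mpoly) kscale (\<lambda>p. var i * p)"
    by (rule lin_mult)
  have dimX: "kdim ((\<lambda>p. (var i :: 'k mpoly) * p) ` V) = kdim V" for V
    by (rule kdim_image[OF lin inj_var_mult])
  have "gotzmann n K"
    unfolding gotzmann_def
  proof (intro allI impI)
    fix d and J :: "'k mpoly set"
    assume H: "homog_ideal n J \<and> kdim (degcomp J d) = kdim (degcomp K d)"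
    define J' where "J' = (\<lambda>p. var i * p) ` J"
    have hJ': "homog_ideal n J'"
      unfolding J'_def using homog_ideal_var_mult[OF assms(1)] H by blast
    have dJ': "degcomp J' (Suc d) = (\<lambda>p. var i * p) ` degcomp J d"
      unfolding J'_def by (rule degcomp_var_mult)
    have dI: "degcomp I (Suc d) = (\<lambda>p. var i * p) ` degcomp K d"
      unfolding IK by (rule degcomp_var_mult)
    have "kdim (degcomp J' (Suc d)) = kdim (degcomp I (Suc d))"
      using H by (simp add: dJ' dI dimX)
    with hJ' assms(3) have "kdim (m1mul n (degcomp I (Suc d))) \<le> kdim (m1mul n (degcomp J' (Suc d)))"
      unfolding gotzmann_def by blast
    then show "kdim (m1mul n (degcomp K d)) \<le> kdim (m1mul n (degcomp J d))"
      by (simp add: dJ' dI m1mul_var_mult dimX)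
  qed
  then show ?thesis unfolding K_def .
qed

end
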